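(* Let $d_1,d_2\ge 2$ and let $\rho$ be a density matrix on $\mathbb{C}^{d_1}\otimes\mathbb{C}^{d_2}$. Let $\mathcal{P}=\{P_j\}_{j=1}^{d_1^2}$ be a general SIC-POVM on $\mathbb{C}^{d_1}$ with parameter $a_1$ and $\mathcal{Q}=\{Q_k\}_{k=1}^{d_2^2}$ a general SIC-POVM on $\mathbb{C}^{d_2}$ with parameter $a_2$. Let $d=\min\{d_1^2,d_2^2\}$ and define $$J(\rho)=\max_{\sigma,\tau}\sum_{j=1}^{d}\mathrm{Tr}\big[(P_{\sigma(j)}\otimes Q_{\tau(j)})\rho\big],$$ where the maximum runs over all injective maps $\sigma:\{1,\dots,d\}\to\{1,\dots,d_1^2\}$ and $\tau:\{1,\dots,d\}\to\{1,\dots,d_2^2\}$. If $\rho$ is separable, then $$J(\rho)\le \sqrt{\frac{a_1d_1^2+1}{d_1(d_1+1)}}\,\sqrt{\frac{a_2d_2^2+1}{d_2(d_2+1)}}.$$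
   Context: A general SIC-POVM on $\mathbb{C}^{n}$ with parameter $a$ is a set of $n^2$ positive semidefinite operators $\{P_\alpha\}_{\alpha=1}^{n^2}$ on $\mathbb{C}^{n}$ such that $\sum_{\alpha=1}^{n^2}P_\alpha=I$, $\mathrm{Tr}(P_\alpha^2)=a$ for all $\alpha$, and $\mathrm{Tr}(P_\alpha P_\beta)=\frac{1-na}{n(n^2-1)}$ for all $\alpha\neq\beta$; here $\frac{1}{n^3}<a\le\frac{1}{n^2}$. A density matrix on $\mathbb{C}^{d_1}\otimes\mathbb{C}^{d_2}$ is separable if it is a convex combination of product states $\rho_A\otimes\rho_B$. *)

theory Defs
  imports Complex_Main "HOL-Library.FuncSet" "Jordan_Normal_Form.Matrix"
begin

(* Complex matrices are Jordan_Normal_Form matrices "complex mat"; indices are 0-based. *)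

definition cmat_adj :: "complex mat \<Rightarrow> complex mat" where
  "cmat_adj A = mat (dim_col A) (dim_row A) (\<lambda>(i,j). cnj (A $$ (j,i)))"

definition ctrace :: "complex mat \<Rightarrow> complex" where
  "ctrace A = (\<Sum>i<dim_row A. A $$ (i,i))"

definition psd :: "nat \<Rightarrow> complex mat \<Rightarrow> bool" where
  "psd n A \<longleftrightarrow> A \<in> carrier_mat n n \<and> cmat_adj A = A \<and>
     (\<forall>v \<in> carrier_vec n. Im (conjugate v \<bullet> (A *\<^sub>v v)) = 0 \<and> 0 \<le> Re (conjugate v \<bullet> (A *\<^sub>v v)))"

definition density :: "nat \<Rightarrow> complex mat \<Rightarrow> bool" where
  "density n \<rho> \<longleftrightarrow> psd n \<rho> \<and> ctrace \<rho> = 1"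

definition kron :: "complex mat \<Rightarrow> complex mat \<Rightarrow> complex mat" where
  "kron A B = mat (dim_row A * dim_row B) (dim_col A * dim_col B)
     (\<lambda>(i,j). A $$ (i div dim_row B, j div dim_col B) * B $$ (i mod dim_row B, j mod dim_col B))"

definition separable :: "nat \<Rightarrow> nat \<Rightarrow> complex mat \<Rightarrow> bool" where
  "separable d1 d2 \<rho> \<longleftrightarrow>
     (\<exists>m (p :: nat \<Rightarrow> real) A B.
        (\<forall>i<m. 0 \<le> p i \<and> density d1 (A i) \<and> density d2 (B i)) \<and>
        (\<Sum>i<m. p i) = 1 \<and>
        \<rho> = mat (d1 * d2) (d1 * d2)
               (\<lambda>ij. \<Sum>i<m. complex_of_real (p i) * kron (A i) (B i) $$ ij))"

definition gen_sic_povm :: "nat \<Rightarrow> real \<Rightarrow> (nat \<Rightarrow> complex mat) \<Rightarrow> bool" where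
  "gen_sic_povm n a P \<longleftrightarrow>
     1 / real n ^ 3 < a \<and> a \<le> 1 / real n ^ 2 \<and>
     (\<forall>\<alpha><n^2. psd n (P \<alpha>)) \<and>
     mat n n (\<lambda>ij. \<Sum>\<alpha><n^2. P \<alpha> $$ ij) = 1\<^sub>m n \<and>
     (\<forall>\<alpha><n^2. ctrace (P \<alpha> * P \<alpha>) = complex_of_real a) \<and>
     (\<forall>\<alpha><n^2. \<forall>\<beta><n^2. \<alpha> \<noteq> \<beta> \<longrightarrow>
        ctrace (P \<alpha> * P \<beta>) = complex_of_real ((1 - real n * a) / (real n * (real n ^ 2 - 1))))"

definition J_sic :: "nat \<Rightarrow> nat \<Rightarrow> (nat \<Rightarrow> complex mat) \<Rightarrow> (nat \<Rightarrow> complex mat) \<Rightarrow> complex mat \<Rightarrow> real" where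
  "J_sic d1 d2 P Q \<rho> =
     (let d = min (d1^2) (d2^2) in
      Max {Re (\<Sum>j<d. ctrace (kron (P (\<sigma> j)) (Q (\<tau> j)) * \<rho>)) | \<sigma> \<tau>.
             \<sigma> \<in> {..<d} \<rightarrow>\<^sub>E {..<d1^2} \<and> inj_on \<sigma> {..<d} \<and>
             \<tau> \<in> {..<d} \<rightarrow>\<^sub>E {..<d2^2} \<and> inj_on \<tau> {..<d}})"

end

theory Submission
  imports Defs
begin


definition hs :: "nat \<Rightarrow> (nat\<Rightarrow>nat\<Rightarrow>complex) \<Rightarrow> (nat\<Rightarrow>nat\<Rightarrow>complex) \<Rightarrow> complex" where
  "hs n f g = (\<Sum>i<n. \<Sum>k<n. f i k * g k i)"
definition ent :: "complex mat \<Rightarrow> nat \<Rightarrow> nat \<Rightarrow> complex" where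
  "ent X i k = X $$ (i,k)"
definition herm :: "nat \<Rightarrow> (nat\<Rightarrow>nat\<Rightarrow>complex) \<Rightarrow> bool" where
  "herm n f \<longleftrightarrow> (\<forall>i<n. \<forall>k<n. f k i = cnj (f i k))"
definition tr :: "nat \<Rightarrow> (nat\<Rightarrow>nat\<Rightarrow>complex) \<Rightarrow> complex" where
  "tr n f = (\<Sum>i<n. f i i)"
definition dl :: "nat \<Rightarrow> nat \<Rightarrow> complex" where
  "dl i k = (if i = k then 1 else 0)"

lemma ctrace_mult:
  assumes "X \<in> carrier_mat n n" "Y \<in> carrier_mat n n"
  shows "ctrace (X*Y) = hs n (ent X) (ent Y)"
  using assms unfolding ctrace_def hs_def ent_def
  by (auto simp: scalar_prod_def lessThan_atLeast0 intro!: sum.cong)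

lemma ctrace_tr: "X \<in> carrier_mat n n \<Longrightarrow> ctrace X = tr n (ent X)"
  unfolding ctrace_def tr_def ent_def by auto

lemma psd_herm: "psd n X \<Longrightarrow> herm n (ent X)"
proof -
  assume "psd n X"
  hence c: "X \<in> carrier_mat n n" and h: "cmat_adj X = X" unfolding psd_def by auto
  show ?thesis unfolding herm_def ent_def
  proof (intro allI impI)
    fix i k assume "i < n" "k < n"
    have "cmat_adj X $$ (k,i) = cnj (X $$ (i,k))" using c \<open>i<n\<close> \<open>k<n\<close>
      unfolding cmat_adj_def by auto
    thus "X $$ (k,i) = cnj (X $$ (i,k))" using h by simp
  qed
qed

lemma herm_D: "herm n f \<Longrightarrow> i < n \<Longrightarrow> k < n \<Longrightarrow> f k i = cnj (f i k)"
  unfolding herm_def by blast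
lemma herm_cnj: "herm n f \<Longrightarrow> i < n \<Longrightarrow> k < n \<Longrightarrow> cnj (f i k) = f k i"
  unfolding herm_def by (metis complex_cnj_cnj)

lemma real_of_cnj: "cnj z = z \<Longrightarrow> z = of_real (Re z)"
  by (auto simp: complex_eq_iff)

lemma hs_swap: "hs n f g = hs n g f"
  unfolding hs_def by (subst sum.swap) (simp add: mult.commute)

lemma hs_real: "herm n f \<Longrightarrow> herm n g \<Longrightarrow> hs n f g = of_real (Re (hs n f g))"
proof -
  assume hf: "herm n f" and hg: "herm n g"
  have "cnj (hs n f g) = (\<Sum>i<n. \<Sum>k<n. cnj (f i k) * cnj (g k i))"
    unfolding hs_def by (simp add: cnj_sum)
  also have "\<dots> = (\<Sum>i<n. \<Sum>k<n. f k i * g i k)"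
    by (intro sum.cong refl) (simp add: herm_cnj[OF hf] herm_cnj[OF hg])
  also have "\<dots> = hs n f g" unfolding hs_def by (subst sum.swap) simp
  finally show ?thesis by (rule real_of_cnj)
qed


lemma hs_cong: "(\<And>i k. i < n \<Longrightarrow> k < n \<Longrightarrow> g i k = g' i k) \<Longrightarrow> hs n f g = hs n f g'"
  unfolding hs_def by (auto intro!: sum.cong)
lemma hs_cong_left: "(\<And>i k. i < n \<Longrightarrow> k < n \<Longrightarrow> f i k = f' i k) \<Longrightarrow> hs n f g = hs n f' g"
  unfolding hs_def by (auto intro!: sum.cong)
lemma hs_add_left: "hs n (\<lambda>i k. f i k + g i k) h = hs n f h + hs n g h"
  unfolding hs_def by (simp add: distrib_right sum.distrib)
lemma hs_diff_left: "hs n (\<lambda>i k. f i k - g i k) h = hs n f h - hs n g h"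
  unfolding hs_def by (simp add: left_diff_distrib sum_subtractf)
lemma hs_diff_right: "hs n h (\<lambda>i k. f i k - g i k) = hs n h f - hs n h g"
  unfolding hs_def by (simp add: right_diff_distrib sum_subtractf)
lemma hs_scal_left: "hs n (\<lambda>i k. c * f i k) h = c * hs n f h"
  unfolding hs_def by (simp add: sum_distrib_left mult.assoc)
lemma hs_scal_right: "hs n h (\<lambda>i k. c * f i k) = c * hs n h f"
  unfolding hs_def by (simp add: sum_distrib_left mult_ac)
lemma hs_dl_right: "hs n f dl = tr n f"
  unfolding hs_def tr_def dl_def by (simp add: if_distrib cong: if_cong)
lemma hs_dl_left: "hs n dl f = tr n f"
  using hs_dl_right hs_swap by metis
lemma tr_dl: "tr n dl = of_nat n"
  unfolding tr_def dl_def by simp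
lemma hs_sum_left: "hs n (\<lambda>i k. \<Sum>\<alpha>\<in>S. q \<alpha> i k) g = (\<Sum>\<alpha>\<in>S. hs n (q \<alpha>) g)"
proof -
  have "hs n (\<lambda>i k. \<Sum>\<alpha>\<in>S. q \<alpha> i k) g = (\<Sum>i<n. \<Sum>k<n. \<Sum>\<alpha>\<in>S. q \<alpha> i k * g k i)"
    unfolding hs_def by (simp add: sum_distrib_right)
  also have "\<dots> = (\<Sum>i<n. \<Sum>\<alpha>\<in>S. \<Sum>k<n. q \<alpha> i k * g k i)"
    by (rule sum.cong[OF refl], rule sum.swap)
  also have "\<dots> = (\<Sum>\<alpha>\<in>S. \<Sum>i<n. \<Sum>k<n. q \<alpha> i k * g k i)"
    by (rule sum.swap)
  finally show ?thesis unfolding hs_def .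
qed
lemma hs_sum_right: "hs n g (\<lambda>i k. \<Sum>\<alpha>\<in>S. q \<alpha> i k) = (\<Sum>\<alpha>\<in>S. hs n g (q \<alpha>))"
  by (simp only: hs_swap[of n g] hs_sum_left)
lemma tr_sum: "tr n (\<lambda>i k. \<Sum>\<alpha>\<in>S. q \<alpha> i k) = (\<Sum>\<alpha>\<in>S. tr n (q \<alpha>))"
  unfolding tr_def by (rule sum.swap)
lemma tr_scal: "tr n (\<lambda>i k. c * f i k) = c * tr n f"
  unfolding tr_def by (simp add: sum_distrib_left)

lemma herm_hs: assumes hg: "herm n g" shows "hs n f g = (\<Sum>i<n. \<Sum>k<n. f i k * cnj (g i k))"
  unfolding hs_def by (intro sum.cong refl) (simp add: herm_cnj[OF hg])

lemma hs_self: "herm n f \<Longrightarrow> Re (hs n f f) = (\<Sum>i<n. \<Sum>k<n. (cmod (f i k))^2)"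
proof -
  assume h: "herm n f"
  have "hs n f f = (\<Sum>i<n. \<Sum>k<n. of_real ((cmod (f i k))^2))"
    unfolding herm_hs[OF h] by (intro sum.cong refl) (rule complex_norm_square[symmetric])
  thus ?thesis by simp
qed

lemma hs_self_nonneg: "herm n f \<Longrightarrow> 0 \<le> Re (hs n f f)"
  by (simp add: hs_self sum_nonneg)

lemma cs_real:
  fixes a b :: "'a \<Rightarrow> real"
  shows "(\<Sum>i\<in>I. a i * b i)^2 \<le> (\<Sum>i\<in>I. (a i)^2) * (\<Sum>i\<in>I. (b i)^2)"
proof (cases "finite I")
  case False thus ?thesis by simp
next
  case fin: True
  show ?thesis
  proof (cases "(\<Sum>i\<in>I. (b i)^2) = 0")
    case True
    hence "\<forall>i\<in>I. (b i)^2 = 0" using fin by (simp add: sum_nonneg_eq_0_iff)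
    hence "\<forall>i\<in>I. b i = 0" by simp
    thus ?thesis by simp
  next
    case False
    define B where "B = (\<Sum>i\<in>I. (b i)^2)"
    define C where "C = (\<Sum>i\<in>I. a i * b i)"
    define A where "A = (\<Sum>i\<in>I. (a i)^2)"
    have Bpos: "B > 0" using False unfolding B_def by (simp add: order_le_neq_trans sum_nonneg)
    define r where "r = C / B"
    have "0 \<le> (\<Sum>i\<in>I. (a i - r * b i)^2)" by (simp add: sum_nonneg)
    also have "\<dots> = A - 2 * r * C + r^2 * B"
      unfolding A_def B_def C_def
      by (simp add: algebra_simps power2_eq_square sum_distrib_left sum.distrib sum_subtractf)
    also have "\<dots> = A - C^2 / B" unfolding r_def using Bpos by (simp add: field_simps power2_eq_square)
    finally have "C^2 / B \<le> A" by simp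
    hence "C^2 \<le> A * B" using Bpos by (simp add: divide_le_eq)
    thus ?thesis unfolding A_def B_def C_def .
  qed
qed

lemma cs_complex:
  fixes u v :: "'a \<Rightarrow> complex"
  shows "(Re (\<Sum>i\<in>I. u i * cnj (v i)))^2 \<le> (\<Sum>i\<in>I. (cmod (u i))^2) * (\<Sum>i\<in>I. (cmod (v i))^2)"
proof -
  have "\<bar>Re (\<Sum>i\<in>I. u i * cnj (v i))\<bar> \<le> cmod (\<Sum>i\<in>I. u i * cnj (v i))" by (rule abs_Re_le_cmod)
  also have "\<dots> \<le> (\<Sum>i\<in>I. cmod (u i * cnj (v i)))" by (rule norm_sum)
  also have "\<dots> = (\<Sum>i\<in>I. cmod (u i) * cmod (v i))" by (simp add: norm_mult)
  finally have 1: "\<bar>Re (\<Sum>i\<in>I. u i * cnj (v i))\<bar> \<le> (\<Sum>i\<in>I. cmod (u i) * cmod (v i))" .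
  have "(Re (\<Sum>i\<in>I. u i * cnj (v i)))^2 = \<bar>Re (\<Sum>i\<in>I. u i * cnj (v i))\<bar>^2" by simp
  also have "\<dots> \<le> (\<Sum>i\<in>I. cmod (u i) * cmod (v i))^2"
    by (rule power_mono[OF 1]) simp
  also have "\<dots> \<le> (\<Sum>i\<in>I. (cmod (u i))^2) * (\<Sum>i\<in>I. (cmod (v i))^2)" by (rule cs_real)
  finally show ?thesis .
qed

lemma hs_cs:
  assumes "herm n f" "herm n g"
  shows "(Re (hs n f g))^2 \<le> Re (hs n f f) * Re (hs n g g)"
proof -
  have e: "\<And>h. (\<Sum>i<n. \<Sum>k<n. h i k) = (\<Sum>p\<in>{..<n}\<times>{..<n}. h (fst p) (snd p))"
    by (simp add: sum.cartesian_product case_prod_unfold)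
  have "hs n f g = (\<Sum>p\<in>{..<n}\<times>{..<n}. f (fst p) (snd p) * cnj (g (fst p) (snd p)))"
    unfolding herm_hs[OF assms(2)] e ..
  moreover have "Re (hs n f f) = (\<Sum>p\<in>{..<n}\<times>{..<n}. (cmod (f (fst p) (snd p)))^2)"
    unfolding hs_self[OF assms(1)] e ..
  moreover have "Re (hs n g g) = (\<Sum>p\<in>{..<n}\<times>{..<n}. (cmod (g (fst p) (snd p)))^2)"
    unfolding hs_self[OF assms(2)] e ..
  ultimately show ?thesis using cs_complex by metis
qed




lemma sum2:
  assumes "finite S" "i \<in> S" "k \<in> S" "i \<noteq> k"
  shows "(\<Sum>l\<in>S. f l * (if l = i then \<alpha> else if l = k then \<beta> else 0)) = f i * \<alpha> + f k * (\<beta>::complex)"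
proof -
  have "(\<Sum>l\<in>S. f l * (if l = i then \<alpha> else if l = k then \<beta> else 0))
      = (\<Sum>l\<in>S. (if l = i then f i * \<alpha> else 0) + (if l = k then f k * \<beta> else 0))"
    using assms(4) by (intro sum.cong) auto
  also have "\<dots> = f i * \<alpha> + f k * \<beta>" using assms by (simp add: sum.distrib)
  finally show ?thesis .
qed

lemma qform2:
  assumes X: "X \<in> carrier_mat n n" and "i < n" "k < n" "i \<noteq> k"
  and v: "v = vec n (\<lambda>j. if j = i then \<alpha> else if j = k then \<beta> else 0)"
  shows "conjugate v \<bullet> (X *\<^sub>v v) = cnj \<alpha> * (X$$(i,i) * \<alpha> + X$$(i,k) * \<beta>) + cnj \<beta> * (X$$(k,i) * \<alpha> + X$$(k,k) * \<beta>)"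
proof -
  have inner: "\<And>j. j < n \<Longrightarrow> (X *\<^sub>v v) $ j = X$$(j,i) * \<alpha> + X$$(j,k) * \<beta>"
    using X assms(2-4) unfolding v
    by (simp add: mult_mat_vec_def scalar_prod_def sum2)
  have "conjugate v \<bullet> (X *\<^sub>v v) = (\<Sum>j\<in>{0..<n}. (X *\<^sub>v v) $ j * (if j = i then cnj \<alpha> else if j = k then cnj \<beta> else 0))"
    using X unfolding v scalar_prod_def by (auto intro!: sum.cong simp: mult.commute)
  also have "\<dots> = (X *\<^sub>v v) $ i * cnj \<alpha> + (X *\<^sub>v v) $ k * cnj \<beta>"
    using assms(2-4) by (intro sum2) auto
  finally show ?thesis using inner assms(2,3) by (simp add: mult.commute)
qed

lemma sum_delta_mult: "finite S \<Longrightarrow> i \<in> S \<Longrightarrow> (\<Sum>l\<in>S. f l * (if l = i then 1 else 0)) = (f i :: complex)"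
proof -
  assume "finite S" "i \<in> S"
  have "(\<Sum>l\<in>S. f l * (if l = i then 1 else 0)) = (\<Sum>l\<in>S. if l = i then f l else 0)"
    by (rule sum.cong) auto
  thus ?thesis using \<open>finite S\<close> \<open>i \<in> S\<close> by simp
qed

lemma psd_diag:
  assumes "psd n X" "i < n"
  shows "X$$(i,i) = of_real (Re (X$$(i,i)))" "0 \<le> Re (X$$(i,i))"
proof -
  have "herm n (ent X)" using psd_herm assms(1) .
  hence "X$$(i,i) = cnj (X$$(i,i))" using assms(2) herm_D[of n "ent X" i i] unfolding ent_def by auto
  thus "X$$(i,i) = of_real (Re (X$$(i,i)))" using real_of_cnj by metis
  define v where "v = vec n (\<lambda>j. if j = i then (1::complex) else 0)"
  have c: "X \<in> carrier_mat n n" using assms(1) unfolding psd_def by auto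
  have "v \<in> carrier_vec n" unfolding v_def by simp
  hence "0 \<le> Re (conjugate v \<bullet> (X *\<^sub>v v))" using assms(1) unfolding psd_def by auto
  moreover have "conjugate v \<bullet> (X *\<^sub>v v) = X$$(i,i)"
  proof -
    have "conjugate v \<bullet> (X *\<^sub>v v) = (\<Sum>l\<in>{0..<n}. (X *\<^sub>v v) $ l * (if l = i then 1 else 0))"
      using c unfolding v_def scalar_prod_def by (auto intro!: sum.cong simp: mult.commute)
    also have "\<dots> = (X *\<^sub>v v) $ i" using assms(2) by (intro sum_delta_mult) auto
    also have "\<dots> = (\<Sum>l\<in>{0..<n}. X$$(i,l) * (if l = i then 1 else 0))"
      using c assms(2) unfolding v_def mult_mat_vec_def scalar_prod_def by simp
    also have "\<dots> = X$$(i,i)" using assms(2) by (intro sum_delta_mult) auto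
    finally show ?thesis .
  qed
  ultimately show "0 \<le> Re (X$$(i,i))" by simp
qed

lemma real_quad_aux:
  fixes xi xk m :: real
  assumes q: "\<And>t. 0 \<le> t^2 * xi - 2 * t * m + m * xk"
    and "0 \<le> xi" "0 \<le> xk" "0 \<le> m"
  shows "m \<le> xi * xk"
proof (cases "xk > 0")
  case True
  have "0 \<le> xk^2 * xi - 2 * xk * m + m * xk" using q .
  also have "\<dots> = xk * (xk * xi - m)" by (simp add: algebra_simps power2_eq_square)
  finally have "0 \<le> xk * xi - m" using True by (simp add: zero_le_mult_iff)
  thus ?thesis by (simp add: mult.commute)
next
  case False
  hence xk0: "xk = 0" using assms by simp
  show ?thesis
  proof (rule ccontr)
    assume "\<not> m \<le> xi * xk"
    hence mpos: "m > 0" using xk0 by simp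
    define t where "t = m / (xi + 1)"
    have tpos: "t > 0" unfolding t_def using mpos assms by simp
    have "t * xi < m" unfolding t_def using mpos assms by (simp add: field_simps)
    hence "t * xi - 2 * m < 0" using mpos by simp
    hence "t * (t * xi - 2 * m) < 0" using tpos by (simp add: mult_pos_neg)
    moreover have "t * (t * xi - 2 * m) = t^2 * xi - 2 * t * m + m * xk"
      using xk0 by (simp add: algebra_simps power2_eq_square)
    ultimately show False using q[of t] by simp
  qed
qed

lemma psd_minor:
  assumes "psd n X" "i < n" "k < n"
  shows "(cmod (X$$(i,k)))^2 \<le> Re (X$$(i,i)) * Re (X$$(k,k))"
proof (cases "i = k")
  case True
  have "X$$(i,i) = of_real (Re (X$$(i,i)))" using psd_diag assms by blast
  hence "cmod (X$$(i,i)) = \<bar>Re (X$$(i,i))\<bar>" by (metis norm_of_real)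
  thus ?thesis using True by (simp add: power2_eq_square)
next
  case False
  have c: "X \<in> carrier_mat n n" using assms(1) unfolding psd_def by auto
  have h: "herm n (ent X)" using psd_herm assms(1) .
  define z where "z = X$$(k,i)"
  have zik: "X$$(i,k) = cnj z" using herm_D[OF h assms(3,2)] unfolding ent_def z_def by auto
  define xi where "xi = Re (X$$(i,i))"
  define xk where "xk = Re (X$$(k,k))"
  have di: "X$$(i,i) = of_real xi" using psd_diag assms unfolding xi_def by blast
  have dk: "X$$(k,k) = of_real xk" using psd_diag assms unfolding xk_def by blast
  define m where "m = (cmod z)^2"
  have mz: "z * cnj z = of_real m" unfolding m_def by (rule complex_norm_square[symmetric])
  have "\<And>t. 0 \<le> t^2 * xi - 2 * t * m + m * xk"
  proof -
    fix t :: real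
    define v where "v = vec n (\<lambda>j. if j = i then complex_of_real t else if j = k then - z else 0)"
    have "v \<in> carrier_vec n" unfolding v_def by simp
    hence pos: "0 \<le> Re (conjugate v \<bullet> (X *\<^sub>v v))" using assms(1) unfolding psd_def by auto
    have q: "conjugate v \<bullet> (X *\<^sub>v v) = cnj (of_real t) * (X$$(i,i) * of_real t + X$$(i,k) * (-z)) + cnj (-z) * (X$$(k,i) * of_real t + X$$(k,k) * (-z))"
      by (rule qform2[OF c assms(2,3) False v_def])
    have r: "cnj (of_real t) * (X$$(i,i) * of_real t + X$$(i,k) * (-z)) + cnj (-z) * (X$$(k,i) * of_real t + X$$(k,k) * (-z)) = of_real (t^2 * xi - 2 * t * m + m * xk)"
    proof -
      have "cnj (of_real t) * (X$$(i,i) * of_real t + X$$(i,k) * (-z)) + cnj (-z) * (X$$(k,i) * of_real t + X$$(k,k) * (-z))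
          = of_real t * of_real t * of_real xi - 2 * of_real t * (z * cnj z) + (z * cnj z) * of_real xk"
        unfolding di dk zik z_def[symmetric] by (simp add: algebra_simps)
      thus ?thesis unfolding mz by (simp add: power2_eq_square)
    qed
    show "0 \<le> t^2 * xi - 2 * t * m + m * xk" using pos unfolding q r by simp
  qed
  moreover have "0 \<le> xi" "0 \<le> xk" using psd_diag assms unfolding xi_def xk_def by blast+
  moreover have m0: "0 \<le> m" unfolding m_def by simp
  ultimately have "m \<le> xi * xk" by (rule real_quad_aux)
  moreover have "cmod (X$$(i,k)) = cmod z" using zik by simp
  ultimately show ?thesis unfolding m_def xi_def xk_def by simp
qed

lemma density_hs_le1:
  assumes "density n X"
  shows "Re (hs n (ent X) (ent X)) \<le> 1"
proof -
  have p: "psd n X" and t: "ctrace X = 1" using assms unfolding density_def by auto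
  have c: "X \<in> carrier_mat n n" using p unfolding psd_def by auto
  have h: "herm n (ent X)" using psd_herm p .
  have "Re (hs n (ent X) (ent X)) = (\<Sum>i<n. \<Sum>k<n. (cmod (X$$(i,k)))^2)"
    unfolding hs_self[OF h] ent_def ..
  also have "\<dots> \<le> (\<Sum>i<n. \<Sum>k<n. Re (X$$(i,i)) * Re (X$$(k,k)))"
    by (intro sum_mono psd_minor[OF p]) auto
  also have "\<dots> = (\<Sum>i<n. Re (X$$(i,i))) * (\<Sum>k<n. Re (X$$(k,k)))"
    by (simp add: sum_product)
  also have "(\<Sum>i<n. Re (X$$(i,i))) = Re (ctrace X)" using c unfolding ctrace_def by simp
  finally show ?thesis using t by simp
qed




lemma aux_div: "(m::real) \<noteq> 0 \<Longrightarrow> n \<noteq> 0 \<Longrightarrow> p \<noteq> 0 \<Longrightarrow> (m / n) * (X / (n * (m * p))) = X / (n^2 * p)"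
  by (simp add: field_simps power2_eq_square)

lemma aux2: "(n::real) \<noteq> 0 \<Longrightarrow> p \<noteq> 0 \<Longrightarrow> (a*n^2+1)/(n*p) - (1/n^2 + (a*n^3 - 1)/(n^2*p)) = (n*(a*n^2+1) - (p + a*n^3 - 1))/(n^2*p)"
  by (simp add: field_simps power2_eq_square power3_eq_cube)

lemma final_arith:
  fixes n a S :: real
  assumes n2: "n \<ge> 2" and alo: "1 / n^3 < a"
  and ineq: "(S - 1/n^2)^2 \<le> (1 - 1/n) * ((1 - n*a)/(n*(n^2-1)) + (a - (1 - n*a)/(n*(n^2-1))) * S - 1/n^3)"
  shows "S \<le> (a * n^2 + 1) / (n * (n + 1))"
proof -
  define c where "c = (a * n^2 + 1) / (n * (n + 1))"
  have n0: "n > 0" "n^2 - 1 > 0" "n + 1 > 0" "n - 1 > 0" using n2 by (auto simp: power2_eq_square) (smt (verit) mult_le_cancel_right1 n2)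
  define b where "b = (1 - n*a)/(n*(n^2-1))"
  define r where "r = (a * n^3 - 1) / (n^2 * (n + 1))"
  have fac: "n^2 - 1 = (n - 1) * (n + 1)" by (simp add: algebra_simps power2_eq_square)
  define K where "K = (a * n^3 - 1)/(n*(n^2-1))"
  have e1: "a - b = (a * n^3 - 1)/(n*(n^2-1))"
    unfolding b_def using n0 by (simp add: field_simps power2_eq_square power3_eq_cube)
  have e2: "b - 1/n^3 = - ((a * n^3 - 1)/(n*(n^2-1))) * (1/n^2)"
    unfolding b_def using n0 by (simp add: field_simps power2_eq_square power3_eq_cube)
  have e3: "(1 - 1/n) * ((a * n^3 - 1)/(n*(n^2-1))) = r"
  proof -
    have nz: "n \<noteq> 0" "n - 1 \<noteq> 0" "n + 1 \<noteq> 0" using n0 by auto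
    have "1 - 1/n = (n - 1)/n" using nz by (simp add: field_simps)
    moreover have "((n - 1)/n) * ((a * n^3 - 1)/(n*((n - 1) * (n + 1)))) = (a * n^3 - 1) / (n^2 * (n + 1))"
      using aux_div[OF nz(2,1,3)] .
    ultimately show ?thesis unfolding r_def fac by simp
  qed
  have "b + (a - b) * S - 1/n^3 = (a - b) * (S - 1/n^2) + ((a - b) * (1/n^2) + (b - 1/n^3))"
    by (simp add: algebra_simps)
  also have "(a - b) * (1/n^2) + (b - 1/n^3) = 0" unfolding e1 e2 by simp
  finally have f1: "b + (a - b) * S - 1/n^3 = K * (S - 1/n^2)" unfolding e1 K_def by simp
  have e3': "(1 - 1/n) * K = r" unfolding K_def by (rule e3)
  have "(1 - 1/n) * (b + (a - b) * S - 1/n^3) = r * (S - 1/n^2)"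
    unfolding f1 by (simp only: mult.assoc[symmetric] e3')
  hence ineq2: "(S - 1/n^2)^2 \<le> r * (S - 1/n^2)" using ineq unfolding b_def by simp
  have cr: "c = 1/n^2 + r"
  proof -
    have "c - (1/n^2 + r) = (n*(a*n^2+1) - ((n+1) + a*n^3 - 1))/(n^2*(n+1))"
      unfolding c_def r_def by (rule aux2) (use n0 in auto)
    also have "n*(a*n^2+1) - ((n+1) + a*n^3 - 1) = 0" by (simp add: algebra_simps power2_eq_square power3_eq_cube)
    finally show ?thesis by simp
  qed
  have an: "a * n^3 > 1" using alo n0 by (simp add: field_simps)
  hence rpos: "r > 0" unfolding r_def using n0 by simp
  show ?thesis
  proof (rule ccontr)
    assume "\<not> S \<le> (a * n^2 + 1) / (n * (n + 1))"
    hence "S > c" unfolding c_def by simp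
    hence u: "S - 1/n^2 > r" using cr by simp
    hence "r * (S - 1/n^2) < (S - 1/n^2) * (S - 1/n^2)" using rpos by (simp add: mult_strict_right_mono)
    thus False using ineq2 by (simp add: power2_eq_square)
  qed
qed

lemma sum_if_eq:
  fixes f :: "nat \<Rightarrow> real"
  assumes "\<alpha> < N"
  shows "(\<Sum>\<beta><N. f \<beta> * (if \<alpha> = \<beta> then a else b)) = b * (\<Sum>\<beta><N. f \<beta>) + (a - b) * f \<alpha>"
proof -
  have "(\<Sum>\<beta><N. f \<beta> * (if \<alpha> = \<beta> then a else b)) = (\<Sum>\<beta><N. b * f \<beta> + (if \<beta> = \<alpha> then (a - b) * f \<alpha> else 0))"
    by (rule sum.cong) (auto simp: algebra_simps)
  also have "\<dots> = b * (\<Sum>\<beta><N. f \<beta>) + (a - b) * f \<alpha>"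
    using assms by (simp add: sum.distrib sum_distrib_left)
  finally show ?thesis .
qed

lemma herm_shift:
  assumes "herm n f"
  shows "herm n (\<lambda>i k. f i k - complex_of_real c * dl i k)"
  unfolding herm_def
proof (intro allI impI)
  fix i k assume "i < n" "k < n"
  have "f k i = cnj (f i k)" by (rule herm_D[OF assms \<open>i<n\<close> \<open>k<n\<close>])
  thus "f k i - complex_of_real c * dl k i = cnj (f i k - complex_of_real c * dl i k)"
    unfolding dl_def by auto
qed

lemma sic_bound:
  assumes n2: "n \<ge> 2" and sic: "gen_sic_povm n a P" and dens: "density n A"
  shows "(\<Sum>\<alpha><n^2. (Re (ctrace (P \<alpha> * A)))^2) \<le> (a * real n^2 + 1) / (real n * (real n + 1))"
proof -
  define N where "N = n^2"
  define b where "b = (1 - real n * a) / (real n * (real n ^ 2 - 1))"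
  have alo: "1 / real n ^ 3 < a" and psdP: "\<And>\<alpha>. \<alpha> < N \<Longrightarrow> psd n (P \<alpha>)"
    and sumP: "mat n n (\<lambda>ij. \<Sum>\<alpha><N. P \<alpha> $$ ij) = 1\<^sub>m n"
    and tra: "\<And>\<alpha>. \<alpha> < N \<Longrightarrow> ctrace (P \<alpha> * P \<alpha>) = complex_of_real a"
    and trb: "\<And>\<alpha> \<beta>. \<alpha> < N \<Longrightarrow> \<beta> < N \<Longrightarrow> \<alpha> \<noteq> \<beta> \<Longrightarrow> ctrace (P \<alpha> * P \<beta>) = complex_of_real b"
    using sic unfolding gen_sic_povm_def N_def b_def by auto
  have n0: "real n > 0" "real n \<noteq> 0" using n2 by auto
  have psdA: "psd n A" and ctrA: "ctrace A = 1" using dens unfolding density_def by auto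
  have cA: "A \<in> carrier_mat n n" using psdA unfolding psd_def by auto
  have cP: "\<And>\<alpha>. \<alpha> < N \<Longrightarrow> P \<alpha> \<in> carrier_mat n n" using psdP unfolding psd_def by auto
  define p where "p = (\<lambda>\<alpha>. ent (P \<alpha>))"
  define A' where "A' = ent A"
  have hP: "\<And>\<alpha>. \<alpha> < N \<Longrightarrow> herm n (p \<alpha>)" unfolding p_def using psd_herm psdP by blast
  have hA: "herm n A'" unfolding A'_def using psd_herm psdA by blast
  have G: "\<And>\<alpha> \<beta>. \<alpha> < N \<Longrightarrow> \<beta> < N \<Longrightarrow> hs n (p \<alpha>) (p \<beta>) = complex_of_real (if \<alpha> = \<beta> then a else b)"
  proof -
    fix \<alpha> \<beta> assume "\<alpha> < N" "\<beta> < N"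
    thus "hs n (p \<alpha>) (p \<beta>) = complex_of_real (if \<alpha> = \<beta> then a else b)"
      using tra trb ctrace_mult[OF cP cP] unfolding p_def by (cases "\<alpha> = \<beta>") auto
  qed
  have sumD: "\<And>i k. i < n \<Longrightarrow> k < n \<Longrightarrow> (\<Sum>\<alpha><N. p \<alpha> i k) = dl i k"
  proof -
    fix i k assume ik: "i < n" "k < n"
    have "mat n n (\<lambda>ij. \<Sum>\<alpha><N. P \<alpha> $$ ij) $$ (i,k) = (1\<^sub>m n :: complex mat) $$ (i,k)" using sumP by simp
    thus "(\<Sum>\<alpha><N. p \<alpha> i k) = dl i k" using ik unfolding p_def ent_def dl_def by simp
  qed
  have trA: "tr n A' = 1" using ctrA ctrace_tr[OF cA] unfolding A'_def by simp
  define x where "x = (\<lambda>\<alpha>. Re (hs n (p \<alpha>) A'))"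
  have tx: "\<And>\<alpha>. \<alpha> < N \<Longrightarrow> hs n (p \<alpha>) A' = complex_of_real (x \<alpha>)"
    unfolding x_def using hs_real hP hA by blast
  have goalx: "\<And>\<alpha>. \<alpha> < N \<Longrightarrow> Re (ctrace (P \<alpha> * A)) = x \<alpha>"
    unfolding x_def p_def A'_def using ctrace_mult[OF cP cA] by simp
  define S where "S = (\<Sum>\<alpha><N. (x \<alpha>)^2)"
  have sx: "(\<Sum>\<alpha><N. x \<alpha>) = 1"
  proof -
    have "complex_of_real (\<Sum>\<alpha><N. x \<alpha>) = (\<Sum>\<alpha><N. hs n (p \<alpha>) A')" using tx by simp
    also have "\<dots> = hs n (\<lambda>i k. \<Sum>\<alpha><N. p \<alpha> i k) A'" by (rule hs_sum_left[symmetric])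
    also have "\<dots> = hs n dl A'" by (rule hs_cong_left) (simp add: sumD)
    also have "\<dots> = 1" using trA by (simp add: hs_dl_left)
    finally show ?thesis by (simp only: of_real_eq_1_iff)
  qed
  have trp: "\<And>\<alpha>. \<alpha> < N \<Longrightarrow> tr n (p \<alpha>) = complex_of_real (1 / real n)"
  proof -
    fix \<alpha> assume a: "\<alpha> < N"
    have "tr n (p \<alpha>) = hs n (p \<alpha>) dl" by (simp add: hs_dl_right)
    also have "\<dots> = hs n (p \<alpha>) (\<lambda>i k. \<Sum>\<beta><N. p \<beta> i k)" by (rule hs_cong) (simp add: sumD)
    also have "\<dots> = (\<Sum>\<beta><N. hs n (p \<alpha>) (p \<beta>))" by (rule hs_sum_right)
    also have "\<dots> = (\<Sum>\<beta><N. complex_of_real (1 * (if \<alpha> = \<beta> then a else b)))" using G a by simp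
    also have "\<dots> = complex_of_real (\<Sum>\<beta><N. 1 * (if \<alpha> = \<beta> then a else b))"
      by (rule of_real_sum[symmetric])
    also have "(\<Sum>\<beta><N. 1 * (if \<alpha> = \<beta> then a else b)) = b * real N + (a - b)"
      using sum_if_eq[OF a, of "\<lambda>_. 1" a b] by simp
    also have "b * real N + (a - b) = 1 / real n"
    proof -
      have "(2::real)^2 \<le> real n ^ 2" by (rule power_mono) (use n2 in auto)
      hence nn: "real n ^ 2 - 1 \<noteq> 0" by simp
      have "b * real N + (a - b) = a + b * (real n ^ 2 - 1)" unfolding N_def by (simp add: algebra_simps)
      also have "b * (real n ^ 2 - 1) = (1 - real n * a) / real n" unfolding b_def using nn n0 by simp
      also have "a + (1 - real n * a) / real n = 1 / real n" using n0 by (simp add: field_simps)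
      finally show ?thesis .
    qed
    finally show "tr n (p \<alpha>) = complex_of_real (1 / real n)" .
  qed
  define M where "M = (\<lambda>i k. \<Sum>\<alpha><N. complex_of_real (x \<alpha>) * p \<alpha> i k)"
  have hM: "herm n M" unfolding herm_def
  proof (intro allI impI)
    fix i k assume ik: "i < n" "k < n"
    have "cnj (M i k) = (\<Sum>\<alpha><N. complex_of_real (x \<alpha>) * cnj (p \<alpha> i k))" unfolding M_def by simp
    also have "\<dots> = M k i" unfolding M_def by (intro sum.cong refl) (simp add: herm_cnj[OF hP] ik)
    finally show "M k i = cnj (M i k)" by simp
  qed
  have AM: "hs n A' M = complex_of_real S"
  proof -
    have "hs n A' M = (\<Sum>\<alpha><N. complex_of_real (x \<alpha>) * hs n A' (p \<alpha>))"
      unfolding M_def hs_sum_right hs_scal_right ..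
    also have "\<dots> = (\<Sum>\<alpha><N. complex_of_real ((x \<alpha>)^2))"
      by (rule sum.cong) (auto simp: hs_swap[of n A'] tx power2_eq_square)
    finally show ?thesis unfolding S_def by simp
  qed
  have pM: "\<And>\<alpha>. \<alpha> < N \<Longrightarrow> hs n (p \<alpha>) M = complex_of_real (b + (a - b) * x \<alpha>)"
  proof -
    fix \<alpha> assume a: "\<alpha> < N"
    have "hs n (p \<alpha>) M = (\<Sum>\<beta><N. complex_of_real (x \<beta>) * hs n (p \<alpha>) (p \<beta>))"
      unfolding M_def hs_sum_right hs_scal_right ..
    also have "\<dots> = (\<Sum>\<beta><N. complex_of_real (x \<beta> * (if \<alpha> = \<beta> then a else b)))"
      by (rule sum.cong) (use G a in auto)
    also have "\<dots> = complex_of_real (\<Sum>\<beta><N. x \<beta> * (if \<alpha> = \<beta> then a else b))"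
      by (rule of_real_sum[symmetric])
    also have "(\<Sum>\<beta><N. x \<beta> * (if \<alpha> = \<beta> then a else b)) = b * (\<Sum>\<beta><N. x \<beta>) + (a - b) * x \<alpha>"
      by (rule sum_if_eq[OF a])
    finally show "hs n (p \<alpha>) M = complex_of_real (b + (a - b) * x \<alpha>)" unfolding sx by simp
  qed
  have MM: "hs n M M = complex_of_real (b + (a - b) * S)"
  proof -
    have "hs n M M = (\<Sum>\<alpha><N. complex_of_real (x \<alpha>) * hs n (p \<alpha>) M)"
      unfolding M_def[of] hs_sum_left hs_scal_left by (simp only: M_def[symmetric])
    also have "\<dots> = (\<Sum>\<alpha><N. complex_of_real (b * x \<alpha> + (a - b) * (x \<alpha>)^2))"
      by (rule sum.cong) (auto simp: pM algebra_simps power2_eq_square)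
    also have "\<dots> = complex_of_real (\<Sum>\<alpha><N. b * x \<alpha> + (a - b) * (x \<alpha>)^2)"
      by (rule of_real_sum[symmetric])
    also have "(\<Sum>\<alpha><N. b * x \<alpha> + (a - b) * (x \<alpha>)^2) = b * (\<Sum>\<alpha><N. x \<alpha>) + (a - b) * S"
      unfolding S_def by (simp add: sum.distrib sum_distrib_left)
    finally show ?thesis unfolding sx by simp
  qed
  have trM: "tr n M = complex_of_real (1 / real n)"
  proof -
    have "tr n M = (\<Sum>\<alpha><N. complex_of_real (x \<alpha>) * tr n (p \<alpha>))"
      unfolding M_def tr_sum tr_scal ..
    also have "\<dots> = (\<Sum>\<alpha><N. complex_of_real (x \<alpha> * (1 / real n)))"
      by (rule sum.cong) (auto simp: trp)
    also have "\<dots> = complex_of_real (\<Sum>\<alpha><N. x \<alpha> * (1 / real n))"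
      by (rule of_real_sum[symmetric])
    also have "(\<Sum>\<alpha><N. x \<alpha> * (1 / real n)) = (\<Sum>\<alpha><N. x \<alpha>) * (1 / real n)"
      by (rule sum_distrib_right[symmetric])
    finally show ?thesis unfolding sx by simp
  qed
  define A0 where "A0 = (\<lambda>i k. A' i k - complex_of_real (1 / real n) * dl i k)"
  define M0 where "M0 = (\<lambda>i k. M i k - complex_of_real (1 / real n^2) * dl i k)"
  have hA0: "herm n A0" unfolding A0_def by (rule herm_shift[OF hA])
  have hM0: "herm n M0" unfolding M0_def by (rule herm_shift[OF hM])
  have A'A': "hs n A' A' = complex_of_real (Re (hs n A' A'))" using hs_real[OF hA hA] .
  have e1: "hs n A0 M0 = complex_of_real (S - 1 / real n^2)"
    unfolding A0_def M0_def hs_diff_left hs_diff_right hs_scal_left hs_scal_right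
      hs_dl_right hs_dl_left tr_dl AM trA trM
    using n2 by (simp add: complex_eq_iff field_simps power2_eq_square)
  have e2: "hs n A0 A0 = complex_of_real (Re (hs n A' A') - 1 / real n)"
    unfolding A0_def hs_diff_left hs_diff_right hs_scal_left hs_scal_right
      hs_dl_right hs_dl_left tr_dl trA
    apply (subst A'A')
    using n2 by (simp add: complex_eq_iff field_simps power2_eq_square)
  have e3: "hs n M0 M0 = complex_of_real (b + (a - b) * S - 1 / real n^3)"
    unfolding M0_def hs_diff_left hs_diff_right hs_scal_left hs_scal_right
      hs_dl_right hs_dl_left tr_dl MM trM
    using n2 by (simp add: complex_eq_iff field_simps power2_eq_square power3_eq_cube)
  have cs: "(Re (hs n A0 M0))^2 \<le> Re (hs n A0 A0) * Re (hs n M0 M0)" by (rule hs_cs[OF hA0 hM0])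
  have Q0: "0 \<le> Re (hs n M0 M0)" by (rule hs_self_nonneg[OF hM0])
  have h1: "Re (hs n A' A') \<le> 1" unfolding A'_def by (rule density_hs_le1[OF dens])
  have "(S - 1 / real n^2)^2 \<le> (Re (hs n A' A') - 1 / real n) * (b + (a - b) * S - 1 / real n^3)"
    using cs unfolding e1 e2 e3 by simp
  also have "\<dots> \<le> (1 - 1 / real n) * (b + (a - b) * S - 1 / real n^3)"
    by (rule mult_right_mono) (use h1 Q0 e3 in auto)
  finally have ineq: "(S - 1 / real n^2)^2 \<le> (1 - 1 / real n) * (b + (a - b) * S - 1 / real n^3)" .
  have "S \<le> (a * real n^2 + 1) / (real n * (real n + 1))"
    by (rule final_arith) (use n2 alo ineq in \<open>auto simp: b_def\<close>)
  moreover have "(\<Sum>\<alpha><n^2. (Re (ctrace (P \<alpha> * A)))^2) = S"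
    unfolding S_def N_def by (rule sum.cong) (auto simp: goalx N_def)
  ultimately show ?thesis by simp
qed




lemma sum_add_split: fixes a b :: nat shows "(\<Sum>r<a + b. f r) = (\<Sum>r<a. f r) + (\<Sum>j<b. f (a + j))"
  by (induction b) (simp_all add: add.assoc)

lemma sum_prod_index: fixes m n :: nat shows "(\<Sum>r<m * n. f r) = (\<Sum>i<m. \<Sum>j<n. f (i * n + j))"
proof (induction m)
  case 0 thus ?case by simp
next
  case (Suc m)
  have "(\<Sum>r<Suc m * n. f r) = (\<Sum>r<m * n + n. f r)" by (simp add: add.commute)
  also have "\<dots> = (\<Sum>r<m * n. f r) + (\<Sum>j<n. f (m * n + j))" by (rule sum_add_split)
  finally show ?case using Suc by simp
qed

lemma kron_carrier: "A \<in> carrier_mat d1 d1 \<Longrightarrow> B \<in> carrier_mat d2 d2 \<Longrightarrow> kron A B \<in> carrier_mat (d1*d2) (d1*d2)"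
  unfolding kron_def by auto

lemma idx_lt: "i < d1 \<Longrightarrow> j < d2 \<Longrightarrow> i * d2 + j < d1 * (d2::nat)"
proof -
  assume a: "i < d1" "j < d2"
  have "i * d2 + j < i * d2 + d2" using a by simp
  also have "\<dots> = Suc i * d2" by simp
  also have "\<dots> \<le> d1 * d2" using a by (intro mult_le_mono1) simp
  finally show ?thesis .
qed

lemma kron_idx:
  assumes "A \<in> carrier_mat d1 d1" "B \<in> carrier_mat d2 d2" "i < d1" "j < d2" "k < d1" "l < d2"
  shows "kron A B $$ (i * d2 + j, k * d2 + l) = A $$ (i,k) * B $$ (j,l)"
proof -
  have lt: "i * d2 + j < d1 * d2" "k * d2 + l < d1 * d2"
    using idx_lt assms(3-6) by auto
  show ?thesis using assms lt unfolding kron_def by simp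
qed

lemma kron_trace:
  assumes cP: "P \<in> carrier_mat d1 d1" and cA: "A \<in> carrier_mat d1 d1"
    and cQ: "Q \<in> carrier_mat d2 d2" and cB: "B \<in> carrier_mat d2 d2"
  shows "ctrace (kron P Q * kron A B) = ctrace (P * A) * ctrace (Q * B)"
proof -
  have "ctrace (kron P Q * kron A B) = (\<Sum>r<d1*d2. \<Sum>s<d1*d2. kron P Q $$ (r,s) * kron A B $$ (s,r))"
    using ctrace_mult[OF kron_carrier[OF cP cQ] kron_carrier[OF cA cB]] unfolding hs_def ent_def .
  also have "\<dots> = (\<Sum>i<d1. \<Sum>j<d2. \<Sum>k<d1. \<Sum>l<d2. kron P Q $$ (i*d2+j, k*d2+l) * kron A B $$ (k*d2+l, i*d2+j))"
    by (simp only: sum_prod_index)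
  also have "\<dots> = (\<Sum>i<d1. \<Sum>j<d2. \<Sum>k<d1. \<Sum>l<d2. (P$$(i,k) * A$$(k,i)) * (Q$$(j,l) * B$$(l,j)))"
    by (intro sum.cong refl) (simp add: kron_idx[OF cP cQ] kron_idx[OF cA cB] mult_ac)
  also have "\<dots> = (\<Sum>i<d1. \<Sum>k<d1. \<Sum>j<d2. \<Sum>l<d2. (P$$(i,k) * A$$(k,i)) * (Q$$(j,l) * B$$(l,j)))"
    by (rule sum.cong[OF refl], rule sum.swap)
  also have "\<dots> = (\<Sum>i<d1. \<Sum>k<d1. P$$(i,k) * A$$(k,i)) * (\<Sum>j<d2. \<Sum>l<d2. Q$$(j,l) * B$$(l,j))"
  proof -
    have "(\<Sum>i<d1. \<Sum>k<d1. P$$(i,k) * A$$(k,i)) * (\<Sum>j<d2. \<Sum>l<d2. Q$$(j,l) * B$$(l,j))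
        = (\<Sum>i<d1. \<Sum>k<d1. (P$$(i,k) * A$$(k,i)) * (\<Sum>j<d2. \<Sum>l<d2. Q$$(j,l) * B$$(l,j)))"
      by (simp only: sum_distrib_right)
    also have "\<dots> = (\<Sum>i<d1. \<Sum>k<d1. \<Sum>j<d2. \<Sum>l<d2. (P$$(i,k) * A$$(k,i)) * (Q$$(j,l) * B$$(l,j)))"
      by (simp only: sum_distrib_left)
    finally show ?thesis by simp
  qed
  also have "\<dots> = ctrace (P * A) * ctrace (Q * B)"
    using ctrace_mult[OF cP cA] ctrace_mult[OF cQ cB] unfolding hs_def ent_def by simp
  finally show ?thesis .
qed

lemma trace_sep:
  assumes K: "K \<in> carrier_mat (d1*d2) (d1*d2)"
    and dens: "\<And>i. i < m \<Longrightarrow> density d1 (AA i) \<and> density d2 (BB i)"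
    and rho: "\<rho> = mat (d1 * d2) (d1 * d2) (\<lambda>ij. \<Sum>i<m. complex_of_real (p i) * kron (AA i) (BB i) $$ ij)"
  shows "ctrace (K * \<rho>) = (\<Sum>i<m. complex_of_real (p i) * ctrace (K * kron (AA i) (BB i)))"
proof -
  have cK: "\<And>i. i < m \<Longrightarrow> kron (AA i) (BB i) \<in> carrier_mat (d1*d2) (d1*d2)"
    using dens kron_carrier unfolding density_def psd_def by blast
  have cr: "\<rho> \<in> carrier_mat (d1*d2) (d1*d2)" unfolding rho by simp
  have "ctrace (K * \<rho>) = hs (d1*d2) (ent K) (ent \<rho>)" by (rule ctrace_mult[OF K cr])
  also have "\<dots> = hs (d1*d2) (ent K) (\<lambda>r s. \<Sum>i<m. complex_of_real (p i) * ent (kron (AA i) (BB i)) r s)"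
    by (rule hs_cong) (simp add: rho ent_def)
  also have "\<dots> = (\<Sum>i<m. complex_of_real (p i) * hs (d1*d2) (ent K) (ent (kron (AA i) (BB i))))"
    unfolding hs_sum_right hs_scal_right ..
  also have "\<dots> = (\<Sum>i<m. complex_of_real (p i) * ctrace (K * kron (AA i) (BB i)))"
    by (intro sum.cong refl) (simp add: ctrace_mult[OF K cK])
  finally show ?thesis .
qed

lemma per_i:
  fixes x y :: "nat \<Rightarrow> real"
  assumes s: "\<And>j. j < d \<Longrightarrow> \<sigma> j < N1" "inj_on \<sigma> {..<d}"
    and t: "\<And>j. j < d \<Longrightarrow> \<tau> j < N2" "inj_on \<tau> {..<d}"
    and bx: "(\<Sum>\<alpha><N1. (x \<alpha>)^2) \<le> c1" and bY: "(\<Sum>\<beta><N2. (y \<beta>)^2) \<le> c2"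
  shows "(\<Sum>j<d. x (\<sigma> j) * y (\<tau> j)) \<le> sqrt c1 * sqrt c2"
proof -
  define X where "X = (\<Sum>j<d. (x (\<sigma> j))^2)"
  define Y where "Y = (\<Sum>j<d. (y (\<tau> j))^2)"
  have "X = (\<Sum>\<alpha>\<in>\<sigma> ` {..<d}. (x \<alpha>)^2)" unfolding X_def using s(2) by (simp add: sum.reindex)
  also have "\<dots> \<le> (\<Sum>\<alpha><N1. (x \<alpha>)^2)" by (rule sum_mono2) (use s(1) in auto)
  finally have X1: "X \<le> c1" using bx by simp
  have "Y = (\<Sum>\<beta>\<in>\<tau> ` {..<d}. (y \<beta>)^2)" unfolding Y_def using t(2) by (simp add: sum.reindex)
  also have "\<dots> \<le> (\<Sum>\<beta><N2. (y \<beta>)^2)" by (rule sum_mono2) (use t(1) in auto)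
  finally have Y1: "Y \<le> c2" using bY by simp
  have X0: "0 \<le> X" unfolding X_def by (simp add: sum_nonneg)
  have Y0: "0 \<le> Y" unfolding Y_def by (simp add: sum_nonneg)
  have cs: "(\<Sum>j<d. x (\<sigma> j) * y (\<tau> j))^2 \<le> X * Y" unfolding X_def Y_def by (rule cs_real)
  have "(\<Sum>j<d. x (\<sigma> j) * y (\<tau> j)) \<le> \<bar>\<Sum>j<d. x (\<sigma> j) * y (\<tau> j)\<bar>" by simp
  also have "\<dots> = sqrt ((\<Sum>j<d. x (\<sigma> j) * y (\<tau> j))^2)" by simp
  also have "\<dots> \<le> sqrt (X * Y)" using cs by (rule real_sqrt_le_mono)
  also have "\<dots> \<le> sqrt (c1 * c2)" by (rule real_sqrt_le_mono, rule mult_mono) (use X1 Y1 X0 Y0 in auto)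
  also have "\<dots> = sqrt c1 * sqrt c2" by (rule real_sqrt_mult)
  finally show ?thesis .
qed

lemma elem_bound:
  assumes d1: "d1 \<ge> 2" and d2: "d2 \<ge> 2"
    and sicP: "gen_sic_povm d1 a1 P" and sicQ: "gen_sic_povm d2 a2 Q"
    and sep: "separable d1 d2 \<rho>"
    and s: "\<And>j. j < d \<Longrightarrow> \<sigma> j < d1^2" "inj_on \<sigma> {..<d}"
    and t: "\<And>j. j < d \<Longrightarrow> \<tau> j < d2^2" "inj_on \<tau> {..<d}"
  shows "Re (\<Sum>j<d. ctrace (kron (P (\<sigma> j)) (Q (\<tau> j)) * \<rho>)) \<le>
           sqrt ((a1 * real d1 ^ 2 + 1) / (real d1 * (real d1 + 1))) *
           sqrt ((a2 * real d2 ^ 2 + 1) / (real d2 * (real d2 + 1)))"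
proof -
  define c1 where "c1 = (a1 * real d1 ^ 2 + 1) / (real d1 * (real d1 + 1))"
  define c2 where "c2 = (a2 * real d2 ^ 2 + 1) / (real d2 * (real d2 + 1))"
  obtain m :: nat and p AA BB where hyp: "\<forall>i<m. 0 \<le> p i \<and> density d1 (AA i) \<and> density d2 (BB i)"
    and ps: "(\<Sum>i<m. p i) = 1"
    and rho: "\<rho> = mat (d1 * d2) (d1 * d2) (\<lambda>ij. \<Sum>i<m. complex_of_real (p i) * kron (AA i) (BB i) $$ ij)"
    using sep unfolding separable_def by blast
  have psdP: "\<And>\<alpha>. \<alpha> < d1^2 \<Longrightarrow> psd d1 (P \<alpha>)" using sicP unfolding gen_sic_povm_def by blast
  have psdQ: "\<And>\<alpha>. \<alpha> < d2^2 \<Longrightarrow> psd d2 (Q \<alpha>)" using sicQ unfolding gen_sic_povm_def by blast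
  have cP: "\<And>\<alpha>. \<alpha> < d1^2 \<Longrightarrow> P \<alpha> \<in> carrier_mat d1 d1" using psdP unfolding psd_def by blast
  have cQ: "\<And>\<alpha>. \<alpha> < d2^2 \<Longrightarrow> Q \<alpha> \<in> carrier_mat d2 d2" using psdQ unfolding psd_def by blast
  have dA: "\<And>i. i < m \<Longrightarrow> density d1 (AA i)" using hyp by blast
  have dB: "\<And>i. i < m \<Longrightarrow> density d2 (BB i)" using hyp by blast
  have psdA: "\<And>i. i < m \<Longrightarrow> psd d1 (AA i)" using dA unfolding density_def by blast
  have psdB: "\<And>i. i < m \<Longrightarrow> psd d2 (BB i)" using dB unfolding density_def by blast
  have cA: "\<And>i. i < m \<Longrightarrow> AA i \<in> carrier_mat d1 d1" using psdA unfolding psd_def by blast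
  have cB: "\<And>i. i < m \<Longrightarrow> BB i \<in> carrier_mat d2 d2" using psdB unfolding psd_def by blast
  define x where "x = (\<lambda>i \<alpha>. Re (ctrace (P \<alpha> * AA i)))"
  define y where "y = (\<lambda>i \<beta>. Re (ctrace (Q \<beta> * BB i)))"
  have hx: "\<And>i \<alpha>. i < m \<Longrightarrow> \<alpha> < d1^2 \<Longrightarrow> ctrace (P \<alpha> * AA i) = complex_of_real (x i \<alpha>)"
  proof -
    fix i \<alpha> assume a: "i < m" "\<alpha> < d1^2"
    have "ctrace (P \<alpha> * AA i) = hs d1 (ent (P \<alpha>)) (ent (AA i))" by (rule ctrace_mult[OF cP[OF a(2)] cA[OF a(1)]])
    also have "\<dots> = complex_of_real (Re (hs d1 (ent (P \<alpha>)) (ent (AA i))))"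
      by (rule hs_real[OF psd_herm[OF psdP[OF a(2)]] psd_herm[OF psdA[OF a(1)]]])
    also have "Re (hs d1 (ent (P \<alpha>)) (ent (AA i))) = x i \<alpha>"
      unfolding x_def using ctrace_mult[OF cP[OF a(2)] cA[OF a(1)]] by simp
    finally show "ctrace (P \<alpha> * AA i) = complex_of_real (x i \<alpha>)" .
  qed
  have hy: "\<And>i \<beta>. i < m \<Longrightarrow> \<beta> < d2^2 \<Longrightarrow> ctrace (Q \<beta> * BB i) = complex_of_real (y i \<beta>)"
  proof -
    fix i \<beta> assume a: "i < m" "\<beta> < d2^2"
    have "ctrace (Q \<beta> * BB i) = hs d2 (ent (Q \<beta>)) (ent (BB i))" by (rule ctrace_mult[OF cQ[OF a(2)] cB[OF a(1)]])
    also have "\<dots> = complex_of_real (Re (hs d2 (ent (Q \<beta>)) (ent (BB i))))"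
      by (rule hs_real[OF psd_herm[OF psdQ[OF a(2)]] psd_herm[OF psdB[OF a(1)]]])
    also have "Re (hs d2 (ent (Q \<beta>)) (ent (BB i))) = y i \<beta>"
      unfolding y_def using ctrace_mult[OF cQ[OF a(2)] cB[OF a(1)]] by simp
    finally show "ctrace (Q \<beta> * BB i) = complex_of_real (y i \<beta>)" .
  qed
  have step: "\<And>j. j < d \<Longrightarrow> ctrace (kron (P (\<sigma> j)) (Q (\<tau> j)) * \<rho>) = (\<Sum>i<m. complex_of_real (p i * (x i (\<sigma> j) * y i (\<tau> j))))"
  proof -
    fix j assume j: "j < d"
    have "ctrace (kron (P (\<sigma> j)) (Q (\<tau> j)) * \<rho>) = (\<Sum>i<m. complex_of_real (p i) * ctrace (kron (P (\<sigma> j)) (Q (\<tau> j)) * kron (AA i) (BB i)))"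
      by (rule trace_sep[OF kron_carrier[OF cP[OF s(1)[OF j]] cQ[OF t(1)[OF j]]] _ rho]) (use dA dB in blast)
    also have "\<dots> = (\<Sum>i<m. complex_of_real (p i * (x i (\<sigma> j) * y i (\<tau> j))))"
    proof (rule sum.cong[OF refl])
      fix i assume "i \<in> {..<m}"
      hence i: "i < m" by simp
      show "complex_of_real (p i) * ctrace (kron (P (\<sigma> j)) (Q (\<tau> j)) * kron (AA i) (BB i)) = complex_of_real (p i * (x i (\<sigma> j) * y i (\<tau> j)))"
        unfolding kron_trace[OF cP[OF s(1)[OF j]] cA[OF i] cQ[OF t(1)[OF j]] cB[OF i]]
          hx[OF i s(1)[OF j]] hy[OF i t(1)[OF j]] by simp
    qed
    finally show "ctrace (kron (P (\<sigma> j)) (Q (\<tau> j)) * \<rho>) = (\<Sum>i<m. complex_of_real (p i * (x i (\<sigma> j) * y i (\<tau> j))))" .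
  qed
  have "(\<Sum>j<d. ctrace (kron (P (\<sigma> j)) (Q (\<tau> j)) * \<rho>)) = (\<Sum>j<d. \<Sum>i<m. complex_of_real (p i * (x i (\<sigma> j) * y i (\<tau> j))))"
    by (rule sum.cong[OF refl]) (simp add: step)
  hence "Re (\<Sum>j<d. ctrace (kron (P (\<sigma> j)) (Q (\<tau> j)) * \<rho>)) = (\<Sum>j<d. \<Sum>i<m. p i * (x i (\<sigma> j) * y i (\<tau> j)))"
    by (simp add: Re_sum)
  also have "\<dots> = (\<Sum>i<m. p i * (\<Sum>j<d. x i (\<sigma> j) * y i (\<tau> j)))"
    by (subst sum.swap) (simp add: sum_distrib_left)
  also have "\<dots> \<le> (\<Sum>i<m. p i * (sqrt c1 * sqrt c2))"
  proof (rule sum_mono)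
    fix i assume "i \<in> {..<m}"
    hence i: "i < m" by simp
    have bx: "(\<Sum>\<alpha><d1^2. (x i \<alpha>)^2) \<le> c1"
      unfolding x_def c1_def by (rule sic_bound[OF d1 sicP dA[OF i]])
    have bY: "(\<Sum>\<beta><d2^2. (y i \<beta>)^2) \<le> c2"
      unfolding y_def c2_def by (rule sic_bound[OF d2 sicQ dB[OF i]])
    have "(\<Sum>j<d. x i (\<sigma> j) * y i (\<tau> j)) \<le> sqrt c1 * sqrt c2"
      by (rule per_i[OF s t bx bY])
    moreover have "0 \<le> p i" using hyp i by blast
    ultimately show "p i * (\<Sum>j<d. x i (\<sigma> j) * y i (\<tau> j)) \<le> p i * (sqrt c1 * sqrt c2)"
      by (simp add: mult_left_mono)
  qed
  also have "\<dots> = sqrt c1 * sqrt c2" using ps by (simp add: sum_distrib_right[symmetric])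
  finally show ?thesis unfolding c1_def c2_def .
qed

theorem theorem2:
  fixes d1 d2 :: nat and a1 a2 :: real and P Q :: "nat \<Rightarrow> complex mat" and \<rho> :: "complex mat"
  assumes "d1 \<ge> 2" and "d2 \<ge> 2"
    and "density (d1 * d2) \<rho>"
    and "gen_sic_povm d1 a1 P" and "gen_sic_povm d2 a2 Q"
    and "separable d1 d2 \<rho>"
  shows "J_sic d1 d2 P Q \<rho> \<le>
           sqrt ((a1 * real d1 ^ 2 + 1) / (real d1 * (real d1 + 1))) *
           sqrt ((a2 * real d2 ^ 2 + 1) / (real d2 * (real d2 + 1)))"
proof -
  define d where "d = min (d1^2) (d2^2)"
  define f where "f = (\<lambda>\<sigma> \<tau>. Re (\<Sum>j<d. ctrace (kron (P (\<sigma> j)) (Q (\<tau> j)) * \<rho>)))"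
  define X where "X = {f \<sigma> \<tau> | \<sigma> \<tau>.
             \<sigma> \<in> {..<d} \<rightarrow>\<^sub>E {..<d1^2} \<and> inj_on \<sigma> {..<d} \<and>
             \<tau> \<in> {..<d} \<rightarrow>\<^sub>E {..<d2^2} \<and> inj_on \<tau> {..<d}}"
  have J: "J_sic d1 d2 P Q \<rho> = Max X" unfolding J_sic_def Let_def X_def f_def d_def ..
  have "X \<subseteq> (\<lambda>(\<sigma>,\<tau>). f \<sigma> \<tau>) ` (({..<d} \<rightarrow>\<^sub>E {..<d1^2}) \<times> ({..<d} \<rightarrow>\<^sub>E {..<d2^2}))"
    unfolding X_def by auto
  moreover have "finite ((\<lambda>(\<sigma>,\<tau>). f \<sigma> \<tau>) ` (({..<d} \<rightarrow>\<^sub>E {..<d1^2}) \<times> ({..<d} \<rightarrow>\<^sub>E {..<d2^2})))"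
    by (intro finite_imageI finite_cartesian_product finite_PiE) auto
  ultimately have fin: "finite X" by (rule finite_subset)
  define \<sigma>0 where "\<sigma>0 = restrict (\<lambda>j. j) {..<d}"
  have s1: "\<sigma>0 \<in> {..<d} \<rightarrow>\<^sub>E {..<d1^2}" unfolding \<sigma>0_def d_def by auto
  have s2: "\<sigma>0 \<in> {..<d} \<rightarrow>\<^sub>E {..<d2^2}" unfolding \<sigma>0_def d_def by auto
  have s3: "inj_on \<sigma>0 {..<d}" unfolding \<sigma>0_def inj_on_def by auto
  have "f \<sigma>0 \<sigma>0 \<in> X" unfolding X_def using s1 s2 s3 by blast
  hence ne: "X \<noteq> {}" by blast
  have bd: "\<And>v. v \<in> X \<Longrightarrow> v \<le> sqrt ((a1 * real d1 ^ 2 + 1) / (real d1 * (real d1 + 1))) *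
           sqrt ((a2 * real d2 ^ 2 + 1) / (real d2 * (real d2 + 1)))"
  proof -
    fix v assume "v \<in> X"
    then obtain \<sigma> \<tau> where v: "v = f \<sigma> \<tau>" and a: "\<sigma> \<in> {..<d} \<rightarrow>\<^sub>E {..<d1^2}" "inj_on \<sigma> {..<d}"
        "\<tau> \<in> {..<d} \<rightarrow>\<^sub>E {..<d2^2}" "inj_on \<tau> {..<d}"
      unfolding X_def by blast
    have sa: "\<And>j. j < d \<Longrightarrow> \<sigma> j < d1^2" using a(1) by (auto simp: PiE_iff)
    have ta: "\<And>j. j < d \<Longrightarrow> \<tau> j < d2^2" using a(3) by (auto simp: PiE_iff)
    show "v \<le> sqrt ((a1 * real d1 ^ 2 + 1) / (real d1 * (real d1 + 1))) *
           sqrt ((a2 * real d2 ^ 2 + 1) / (real d2 * (real d2 + 1)))"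
      unfolding v f_def by (rule elem_bound[OF assms(1,2,4,5,6) sa a(2) ta a(4)])
  qed
  show ?thesis unfolding J using fin ne bd by (simp add: Max_le_iff)
qed


end
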